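(* Let $\mathcal G=(V_{\min},V_{\max},E,w,\lambda)$ be a discounted payoff game, let $\sigma$ be a joint strategy, and let $\nu$ be an optimal solution for $f_\sigma$, i.e. a basis valuation of $H$ that minimises $f_\sigma$ over all solutions of $H$. Then: (1) if $\sigma$ is co-optimal, then $f_\sigma(\nu)=0$; (2) if $\nu$ defines strategies for both players and these strategies are the ones given by $\sigma$ (i.e. for every $v\in V$ the inequation $I_{(v,\sigma(v))}$ holds with equality at $\nu$), then $\sigma$ is co-optimal and $\nu=\mathrm{val}(\mathcal G)$.
   Context: A discounted payoff game (DPG) is a tuple $\mathcal G=(V_{\min},V_{\max},E,w,\lambda)$ where $V=V_{\min}\cup V_{\max}$ is a finite set of vertices partitioned into disjoint sets $V_{\min}$ (controlled by player Min) and $V_{\max}$ (controlled by player Max), $E\subseteq V\times V$ is such that every vertex has at least one outgoing edge, $w:E\to\mathbb R$ is a weight function and $\lambda:E\to[0,1)$ a discount function (write $w_e,\lambda_e$). The outcome of an infinite play $e_0e_1e_2\ldots$ (with $e_i=(v_i,v_{i+1})\in E$) is $\sum_{i\ge0}w_{e_i}\prod_{j<i}\lambda_{e_j}$. A joint strategy is a map $\sigma:V\to V$ with $(v,\sigma(v))\in E$ for all $v$; its restrictions to $V_{\min}$ and $V_{\max}$ are positional strategies of Min and Max. $\mathrm{val}(\sigma)(v)$ is the outcome of the unique play from $v$ following $\sigma$. The value of the game is $\mathrm{val}(\mathcal G)(v)=\sup_{\sigma_{\max}}\inf_{\sigma_{\min}}$ of the outcome of the play from $v$ (over positional strategies; these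 games are positionally determined). A joint strategy $\sigma$ is co-optimal iff $\mathrm{val}(\sigma)=\mathrm{val}(\mathcal G)$. $H$ is the system of inequations over unknowns $x\in\mathbb R^V$ containing, for each edge $e=(v,v')$, the inequation $I_e$: $x(v)\ge w_e+\lambda_e x(v')$ if $v\in V_{\max}$ and $x(v)\le w_e+\lambda_e x(v')$ if $v\in V_{\min}$. For a valuation $x$ and edge $(v,v')$, $\mathsf{offset}(x,(v,v'))=x(v)-(w_{(v,v')}+\lambda_{(v,v')}x(v'))$ if $v\in V_{\max}$ and $(w_{(v,v')}+\lambda_{(v,v')}x(v'))-x(v)$ otherwise. For a joint strategy $\sigma$, $f_\sigma(x)=\sum_{v\in V}\mathsf{offset}(x,(v,\sigma(v)))$. A basis of $H$ is a set of $|V|$ inequations of $H$ whose equality versions have a unique common solution; if that solution satisfies all of $H$ it is called the (basis) valuation of that basis. A valuation $x$ defines strategies for both players if every vertex $v$ has an outgoing edge $e$ such that $I_e$ holds with equality at $x$. *)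

theory Defs
  imports "HOL-Analysis.Analysis"
begin

text \<open>Vertices form a finite type 'v (V = UNIV).
  Vmax is the set of Max vertices; Min vertices are the complement.\<close>

definition dpg :: "'v::finite set \<Rightarrow> ('v \<times> 'v) set \<Rightarrow> ('v \<times> 'v \<Rightarrow> real) \<Rightarrow> bool" where
  "dpg Vmax E lam \<longleftrightarrow> (\<forall>v. \<exists>v'. (v, v') \<in> E) \<and> (\<forall>e\<in>E. 0 \<le> lam e \<and> lam e < 1)"

definition joint_strategy :: "('v \<times> 'v) set \<Rightarrow> ('v \<Rightarrow> 'v) \<Rightarrow> bool" where
  "joint_strategy E \<sigma> \<longleftrightarrow> (\<forall>v. (v, \<sigma> v) \<in> E)"

definition play_val :: "('v \<times> 'v \<Rightarrow> real) \<Rightarrow> ('v \<times> 'v \<Rightarrow> real) \<Rightarrow> ('v \<Rightarrow> 'v) \<Rightarrow> 'v \<Rightarrow> real" where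
  "play_val w lam \<sigma> v =
     (\<Sum>i. w ((\<sigma> ^^ i) v, (\<sigma> ^^ Suc i) v) * (\<Prod>j<i. lam ((\<sigma> ^^ j) v, (\<sigma> ^^ Suc j) v)))"

definition combine :: "'v set \<Rightarrow> ('v \<Rightarrow> 'v) \<Rightarrow> ('v \<Rightarrow> 'v) \<Rightarrow> ('v \<Rightarrow> 'v)" where
  "combine Vmax smax smin = (\<lambda>u. if u \<in> Vmax then smax u else smin u)"

text \<open>Value of the game: sup over positional Max strategies of inf over positional Min
  strategies of the outcome (strategies given as functions choosing edges, only their
  restriction to the owner's vertices matters).\<close>
definition game_val :: "'v::finite set \<Rightarrow> ('v \<times> 'v) set \<Rightarrow> ('v \<times> 'v \<Rightarrow> real) \<Rightarrow> ('v \<times> 'v \<Rightarrow> real) \<Rightarrow> 'v \<Rightarrow> real" where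
  "game_val Vmax E w lam v =
     (SUP smax \<in> {s. \<forall>u\<in>Vmax. (u, s u) \<in> E}.
        INF smin \<in> {s. \<forall>u\<in>-Vmax. (u, s u) \<in> E}.
           play_val w lam (combine Vmax smax smin) v)"

definition co_optimal :: "'v::finite set \<Rightarrow> ('v \<times> 'v) set \<Rightarrow> ('v \<times> 'v \<Rightarrow> real) \<Rightarrow> ('v \<times> 'v \<Rightarrow> real) \<Rightarrow> ('v \<Rightarrow> 'v) \<Rightarrow> bool" where
  "co_optimal Vmax E w lam \<sigma> \<longleftrightarrow> play_val w lam \<sigma> = game_val Vmax E w lam"

text \<open>offset(x,(v,v')).  Inequation I_e holds at x iff offset >= 0, with equality iff offset = 0.\<close>
definition offset :: "'v set \<Rightarrow> ('v \<times> 'v \<Rightarrow> real) \<Rightarrow> ('v \<times> 'v \<Rightarrow> real) \<Rightarrow> ('v \<Rightarrow> real) \<Rightarrow> 'v \<times> 'v \<Rightarrow> real" where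
  "offset Vmax w lam x e =
     (if fst e \<in> Vmax then x (fst e) - (w e + lam e * x (snd e))
      else (w e + lam e * x (snd e)) - x (fst e))"

definition ineq_holds :: "'v set \<Rightarrow> ('v \<times> 'v \<Rightarrow> real) \<Rightarrow> ('v \<times> 'v \<Rightarrow> real) \<Rightarrow> ('v \<Rightarrow> real) \<Rightarrow> 'v \<times> 'v \<Rightarrow> bool" where
  "ineq_holds Vmax w lam x e =
     (if fst e \<in> Vmax then x (fst e) \<ge> w e + lam e * x (snd e)
      else x (fst e) \<le> w e + lam e * x (snd e))"

definition eq_holds :: "('v \<times> 'v \<Rightarrow> real) \<Rightarrow> ('v \<times> 'v \<Rightarrow> real) \<Rightarrow> ('v \<Rightarrow> real) \<Rightarrow> 'v \<times> 'v \<Rightarrow> bool" where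
  "eq_holds w lam x e \<longleftrightarrow> x (fst e) = w e + lam e * x (snd e)"

definition solution_H :: "'v set \<Rightarrow> ('v \<times> 'v) set \<Rightarrow> ('v \<times> 'v \<Rightarrow> real) \<Rightarrow> ('v \<times> 'v \<Rightarrow> real) \<Rightarrow> ('v \<Rightarrow> real) \<Rightarrow> bool" where
  "solution_H Vmax E w lam x \<longleftrightarrow> (\<forall>e\<in>E. ineq_holds Vmax w lam x e)"

definition f_strat :: "'v::finite set \<Rightarrow> ('v \<times> 'v \<Rightarrow> real) \<Rightarrow> ('v \<times> 'v \<Rightarrow> real) \<Rightarrow> ('v \<Rightarrow> 'v) \<Rightarrow> ('v \<Rightarrow> real) \<Rightarrow> real" where
  "f_strat Vmax w lam \<sigma> x = (\<Sum>v\<in>UNIV. offset Vmax w lam x (v, \<sigma> v))"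

definition is_basis :: "('v::finite \<times> 'v) set \<Rightarrow> ('v \<times> 'v \<Rightarrow> real) \<Rightarrow> ('v \<times> 'v \<Rightarrow> real) \<Rightarrow> ('v \<times> 'v) set \<Rightarrow> bool" where
  "is_basis E w lam B \<longleftrightarrow> B \<subseteq> E \<and> card B = CARD('v) \<and> (\<exists>!x. \<forall>e\<in>B. eq_holds w lam x e)"

definition basis_valuation :: "'v::finite set \<Rightarrow> ('v \<times> 'v) set \<Rightarrow> ('v \<times> 'v \<Rightarrow> real) \<Rightarrow> ('v \<times> 'v \<Rightarrow> real) \<Rightarrow> ('v \<Rightarrow> real) \<Rightarrow> bool" where
  "basis_valuation Vmax E w lam x \<longleftrightarrow>
     (\<exists>B. is_basis E w lam B \<and> (\<forall>e\<in>B. eq_holds w lam x e)) \<and> solution_H Vmax E w lam x"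

definition defines_strategies :: "('v \<times> 'v) set \<Rightarrow> ('v \<times> 'v \<Rightarrow> real) \<Rightarrow> ('v \<times> 'v \<Rightarrow> real) \<Rightarrow> ('v \<Rightarrow> real) \<Rightarrow> bool" where
  "defines_strategies E w lam x \<longleftrightarrow> (\<forall>v. \<exists>v'. (v, v') \<in> E \<and> eq_holds w lam x (v, v'))"

end

theory Submission
  imports Defs
begin

lemma max_diff:
  fixes f g :: "'a \<Rightarrow> real"
  assumes "finite S" "S \<noteq> {}" "\<forall>u\<in>S. \<bar>f u - g u\<bar> \<le> K"
  shows "\<bar>Max (f ` S) - Max (g ` S)\<bar> \<le> K"
proof -
  have one: "Max (f ` S) - Max (g ` S) \<le> K" if fin: "finite S" "S \<noteq> {}" "\<forall>u\<in>S. \<bar>f u - g u\<bar> \<le> K"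
    for f g :: "'a \<Rightarrow> real"
  proof -
    have "Max (f ` S) \<in> f ` S" using fin by (intro Max_in) auto
    then obtain a where a: "a \<in> S" "Max (f ` S) = f a" by blast
    have "g a \<le> Max (g ` S)" using a fin by auto
    moreover have "f a - g a \<le> K" using fin a by auto
    ultimately show ?thesis using a by linarith
  qed
  have "Max (f ` S) - Max (g ` S) \<le> K" using one assms by blast
  moreover have "Max (g ` S) - Max (f ` S) \<le> K" using one[of g f] assms by (auto simp: abs_minus_commute)
  ultimately show ?thesis by linarith
qed

lemma min_diff:
  fixes f g :: "'a \<Rightarrow> real"
  assumes "finite S" "S \<noteq> {}" "\<forall>u\<in>S. \<bar>f u - g u\<bar> \<le> K"
  shows "\<bar>Min (f ` S) - Min (g ` S)\<bar> \<le> K"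
proof -
  have one: "Min (f ` S) - Min (g ` S) \<le> K" if fin: "finite S" "S \<noteq> {}" "\<forall>u\<in>S. \<bar>f u - g u\<bar> \<le> K"
    for f g :: "'a \<Rightarrow> real"
  proof -
    have "Min (g ` S) \<in> g ` S" using fin by (intro Min_in) auto
    then obtain a where a: "a \<in> S" "Min (g ` S) = g a" by blast
    have "Min (f ` S) \<le> f a" using a fin by auto
    moreover have "f a - g a \<le> K" using fin a by auto
    ultimately show ?thesis using a by linarith
  qed
  have "Min (f ` S) - Min (g ` S) \<le> K" using one assms by blast
  moreover have "Min (g ` S) - Min (f ` S) \<le> K" using one[of g f] assms by (auto simp: abs_minus_commute)
  ultimately show ?thesis by linarith
qed

lemma le_zero_geom:
  fixes a M c :: real
  assumes "\<forall>n. a \<le> M * c ^ n" "0 \<le> c" "c < 1"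
  shows "a \<le> 0"
proof -
  have "(\<lambda>n. M * c ^ n) \<longlonglongrightarrow> M * 0"
    by (intro tendsto_mult tendsto_const LIMSEQ_power_zero) (use assms in auto)
  then show ?thesis using assms(1) LIMSEQ_le_const by fastforce
qed

definition T :: "'v::finite set \<Rightarrow> ('v \<times> 'v) set \<Rightarrow> ('v \<times> 'v \<Rightarrow> real) \<Rightarrow> ('v \<times> 'v \<Rightarrow> real) \<Rightarrow> ('v \<Rightarrow> real) \<Rightarrow> 'v \<Rightarrow> real" where
  "T Vmax E w lam x v = (if v \<in> Vmax then Max ((\<lambda>u. w (v,u) + lam (v,u) * x u) ` {u. (v,u) \<in> E})
     else Min ((\<lambda>u. w (v,u) + lam (v,u) * x u) ` {u. (v,u) \<in> E}))"

definition bellman :: "'v::finite set \<Rightarrow> ('v \<times> 'v) set \<Rightarrow> ('v \<times> 'v \<Rightarrow> real) \<Rightarrow> ('v \<times> 'v \<Rightarrow> real) \<Rightarrow> ('v \<Rightarrow> real) \<Rightarrow> bool" where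
  "bellman Vmax E w lam x \<longleftrightarrow> solution_H Vmax E w lam x \<and> (\<forall>v. \<exists>u. (v,u) \<in> E \<and> eq_holds w lam x (v,u))"

locale dpgl =
  fixes Vmax :: "'v::finite set" and E :: "('v \<times> 'v) set" and w lam :: "'v \<times> 'v \<Rightarrow> real"
  assumes dpg: "dpg Vmax E lam"
begin

definition cc where "cc = Max (lam ` E)"
definition WW where "WW = Max ((\<lambda>e. \<bar>w e\<bar>) ` E)"

lemma E_fin: "finite E" by simp

lemma out_ne: "{u. (v,u) \<in> E} \<noteq> {}" using dpg unfolding dpg_def by auto

lemma E_ne: "E \<noteq> {}" using out_ne by auto

lemma lam_ge: "e \<in> E \<Longrightarrow> 0 \<le> lam e" using dpg unfolding dpg_def by auto

lemma lam_le: "e \<in> E \<Longrightarrow> lam e \<le> cc" unfolding cc_def using E_fin by auto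

lemma cc_lt: "cc < 1"
proof -
  have "cc \<in> lam ` E" unfolding cc_def using E_fin E_ne by (intro Max_in) auto
  then obtain e where "e \<in> E" "cc = lam e" by blast
  then show ?thesis using dpg unfolding dpg_def by auto
qed

lemma cc_ge: "0 \<le> cc"
proof -
  obtain e where "e \<in> E" using E_ne by auto
  then show ?thesis using lam_ge[of e] lam_le[of e] by linarith
qed

lemma w_le: "e \<in> E \<Longrightarrow> \<bar>w e\<bar> \<le> WW" unfolding WW_def using E_fin by auto

lemma T_contr:
  assumes "\<forall>u. \<bar>x u - y u\<bar> \<le> D"
  shows "\<bar>T Vmax E w lam x v - T Vmax E w lam y v\<bar> \<le> cc * D"
proof -
  have D: "0 \<le> D" using assms by (meson abs_ge_zero order_trans)
  have b: "\<forall>u\<in>{u. (v,u) \<in> E}. \<bar>(w (v,u) + lam (v,u) * x u) - (w (v,u) + lam (v,u) * y u)\<bar> \<le> cc * D"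
  proof
    fix u assume "u \<in> {u. (v,u) \<in> E}"
    then have "0 \<le> lam (v,u)" "lam (v,u) \<le> cc" using lam_ge lam_le by auto
    moreover have "\<bar>(w (v,u) + lam (v,u) * x u) - (w (v,u) + lam (v,u) * y u)\<bar> = lam (v,u) * \<bar>x u - y u\<bar>"
      using \<open>0 \<le> lam (v,u)\<close> by (simp add: abs_mult right_diff_distrib[symmetric])
    ultimately show "\<bar>(w (v,u) + lam (v,u) * x u) - (w (v,u) + lam (v,u) * y u)\<bar> \<le> cc * D"
      using assms D mult_mono[of "lam (v,u)" cc "\<bar>x u - y u\<bar>" D] by simp
  qed
  have fin: "finite {u. (v,u) \<in> E}" by simp
  show ?thesis unfolding T_def
    using max_diff[OF fin out_ne b] min_diff[OF fin out_ne b] by auto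
qed

lemma fix_bellman:
  assumes "T Vmax E w lam x = x"
  shows "bellman Vmax E w lam x"
proof -
  have fin: "\<And>v. finite {u. (v,u) \<in> E}" by simp
  have ineq: "ineq_holds Vmax w lam x (v,u)" if "(v,u) \<in> E" for v u
  proof -
    have "x v = T Vmax E w lam x v" using assms by simp
    then show ?thesis using that fin[of v] unfolding ineq_holds_def T_def by auto
  qed
  have eq: "\<exists>u. (v,u) \<in> E \<and> eq_holds w lam x (v,u)" for v
  proof (cases "v \<in> Vmax")
    case True
    have "Max ((\<lambda>u. w (v,u) + lam (v,u) * x u) ` {u. (v,u) \<in> E}) \<in> (\<lambda>u. w (v,u) + lam (v,u) * x u) ` {u. (v,u) \<in> E}"
      using fin[of v] out_ne[of v] by (intro Max_in) auto
    then obtain u where "(v,u) \<in> E" "Max ((\<lambda>u. w (v,u) + lam (v,u) * x u) ` {u. (v,u) \<in> E}) = w (v,u) + lam (v,u) * x u"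
      by auto
    moreover have "x v = T Vmax E w lam x v" using assms by simp
    ultimately show ?thesis using True unfolding T_def eq_holds_def by auto
  next
    case False
    have "Min ((\<lambda>u. w (v,u) + lam (v,u) * x u) ` {u. (v,u) \<in> E}) \<in> (\<lambda>u. w (v,u) + lam (v,u) * x u) ` {u. (v,u) \<in> E}"
      using fin[of v] out_ne[of v] by (intro Min_in) auto
    then obtain u where "(v,u) \<in> E" "Min ((\<lambda>u. w (v,u) + lam (v,u) * x u) ` {u. (v,u) \<in> E}) = w (v,u) + lam (v,u) * x u"
      by auto
    moreover have "x v = T Vmax E w lam x v" using assms by simp
    ultimately show ?thesis using False unfolding T_def eq_holds_def by auto
  qed
  show ?thesis unfolding bellman_def solution_H_def using ineq eq by auto
qed

lemma fix_exists: "\<exists>x. T Vmax E w lam x = x"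
proof -
  define X where "X n = (T Vmax E w lam ^^ n) (\<lambda>_. 0)" for n
  have XS: "X (Suc n) = T Vmax E w lam (X n)" for n unfolding X_def by simp
  define K where "K = Max (range (\<lambda>v. \<bar>X 1 v - X 0 v\<bar>))"
  have K1: "\<bar>X 1 v - X 0 v\<bar> \<le> K" for v unfolding K_def by (rule Max_ge) auto
  have K0: "0 \<le> K" using K1 by (meson abs_ge_zero order_trans)
  have step: "\<forall>v. \<bar>X (Suc n) v - X n v\<bar> \<le> cc ^ n * K" for n
  proof (induction n)
    case 0 then show ?case using K1 by simp
  next
    case (Suc n)
    show ?case using T_contr[OF Suc] by (simp add: XS mult.assoc)
  qed
  define d where "d v k = X (Suc k) v - X k v" for v k
  have sg: "summable (\<lambda>k. K * cc ^ k)"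
    using cc_ge cc_lt by (intro summable_mult summable_geometric) auto
  have sd: "summable (d v)" for v
    by (rule summable_comparison_test[OF _ sg]) (use step in \<open>auto simp: d_def mult.commute\<close>)
  define L where "L v = suminf (d v)" for v
  have X0: "X 0 v = 0" for v unfolding X_def by simp
  have Xsum: "X n v = (\<Sum>k<n. d v k)" for n v
    unfolding d_def using sum_lessThan_telescope[of "\<lambda>k. X k v" n] X0 by simp
  define B where "B = K / (1 - cc)"
  have tail: "\<bar>L v - X n v\<bar> \<le> cc ^ n * B" for v n
  proof -
    have "L v - X n v = (\<Sum>k. d v (k + n))"
      unfolding L_def Xsum using suminf_split_initial_segment[OF sd, of v n] by simp
    moreover have "\<bar>\<Sum>k. d v (k + n)\<bar> \<le> (\<Sum>k. K * cc ^ (k + n))"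
    proof -
      have sg2: "summable (\<lambda>k. K * cc ^ (k + n))"
        using summable_ignore_initial_segment[OF sg, of n] by simp
      have b: "\<bar>d v (k + n)\<bar> \<le> K * cc ^ (k + n)" for k
        using step[of "k+n"] by (simp add: d_def mult.commute)
      have sa: "summable (\<lambda>k. \<bar>d v (k + n)\<bar>)"
        by (rule summable_comparison_test[OF _ sg2]) (use b in auto)
      have "\<bar>\<Sum>k. d v (k + n)\<bar> \<le> (\<Sum>k. \<bar>d v (k + n)\<bar>)"
        using summable_norm[of "\<lambda>k. d v (k + n)"] sa by simp
      also have "\<dots> \<le> (\<Sum>k. K * cc ^ (k + n))"
        by (rule suminf_le[OF b sa sg2])
      finally show ?thesis .
    qed
    moreover have "(\<Sum>k. K * cc ^ (k + n)) = cc ^ n * B"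
    proof -
      have "(\<Sum>k. K * cc ^ (k + n)) = (\<Sum>k. (K * cc ^ n) * cc ^ k)"
        by (simp add: power_add mult_ac)
      also have "\<dots> = (K * cc ^ n) * (\<Sum>k. cc ^ k)"
        using cc_ge cc_lt by (intro suminf_mult summable_geometric) auto
      also have "\<dots> = cc ^ n * B"
        unfolding B_def using suminf_geometric[of cc] cc_ge cc_lt by simp
      finally show ?thesis .
    qed
    ultimately show ?thesis by simp
  qed
  have "T Vmax E w lam L v = L v" for v
  proof -
    have "\<bar>T Vmax E w lam L v - L v\<bar> \<le> (2 * B * cc) * cc ^ n" for n
    proof -
      have "\<bar>T Vmax E w lam L v - T Vmax E w lam (X n) v\<bar> \<le> cc * (cc ^ n * B)"
        by (rule T_contr) (use tail in auto)
      moreover have "\<bar>X (Suc n) v - L v\<bar> \<le> cc ^ Suc n * B"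
        using tail[of v "Suc n"] by (simp add: abs_minus_commute)
      moreover have "cc * (cc ^ n * B) = B * cc * cc ^ n" "cc ^ Suc n * B = B * cc * cc ^ n" by (simp_all add: mult_ac)
      ultimately show ?thesis unfolding XS by linarith
    qed
    then have "\<bar>T Vmax E w lam L v - L v\<bar> \<le> 0"
      using le_zero_geom cc_ge cc_lt by blast
    then show ?thesis by simp
  qed
  then show ?thesis by blast
qed

lemma bellman_exists: "\<exists>x. bellman Vmax E w lam x"
  using fix_exists fix_bellman by blast


lemma pv_summable:
  assumes js: "\<forall>v. (v, \<sigma> v) \<in> E"
  shows "summable (\<lambda>i. w ((\<sigma> ^^ i) v, (\<sigma> ^^ Suc i) v) * (\<Prod>j<i. lam ((\<sigma> ^^ j) v, (\<sigma> ^^ Suc j) v)))"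
proof (rule summable_comparison_test)
  have sg: "summable (\<lambda>k. WW * cc ^ k)"
    using cc_ge cc_lt by (intro summable_mult summable_geometric) auto
  show "summable (\<lambda>k. WW * cc ^ k)" by (rule sg)
  have ed: "((\<sigma> ^^ j) v, (\<sigma> ^^ Suc j) v) \<in> E" for j using js by simp
  show "\<exists>N. \<forall>n\<ge>N. norm (w ((\<sigma> ^^ n) v, (\<sigma> ^^ Suc n) v) * (\<Prod>j<n. lam ((\<sigma> ^^ j) v, (\<sigma> ^^ Suc j) v))) \<le> WW * cc ^ n"
  proof (intro exI allI impI)
    fix n :: nat
    have p0: "0 \<le> (\<Prod>j<n. lam ((\<sigma> ^^ j) v, (\<sigma> ^^ Suc j) v))"
      using lam_ge ed by (intro prod_nonneg) auto
    have p1: "(\<Prod>j<n. lam ((\<sigma> ^^ j) v, (\<sigma> ^^ Suc j) v)) \<le> (\<Prod>j<n. cc)"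
      using lam_ge lam_le ed by (intro prod_mono) auto
    have "norm (w ((\<sigma> ^^ n) v, (\<sigma> ^^ Suc n) v) * (\<Prod>j<n. lam ((\<sigma> ^^ j) v, (\<sigma> ^^ Suc j) v)))
        = \<bar>w ((\<sigma> ^^ n) v, (\<sigma> ^^ Suc n) v)\<bar> * (\<Prod>j<n. lam ((\<sigma> ^^ j) v, (\<sigma> ^^ Suc j) v))"
      using p0 by (simp add: abs_mult)
    also have "\<dots> \<le> WW * cc ^ n"
    proof -
      have "0 \<le> WW" using w_le[OF ed[of n]] by (meson abs_ge_zero order_trans)
      then show ?thesis using mult_mono[OF w_le[OF ed[of n]] p1] p0 by simp
    qed
    finally show "norm (w ((\<sigma> ^^ n) v, (\<sigma> ^^ Suc n) v) * (\<Prod>j<n. lam ((\<sigma> ^^ j) v, (\<sigma> ^^ Suc j) v))) \<le> WW * cc ^ n" .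
  qed
qed

lemma pv_rec:
  assumes js: "\<forall>v. (v, \<sigma> v) \<in> E"
  shows "play_val w lam \<sigma> v = w (v, \<sigma> v) + lam (v, \<sigma> v) * play_val w lam \<sigma> (\<sigma> v)"
proof -
  define t where "t v i = w ((\<sigma> ^^ i) v, (\<sigma> ^^ Suc i) v) * (\<Prod>j<i. lam ((\<sigma> ^^ j) v, (\<sigma> ^^ Suc j) v))" for v i
  have pv: "play_val w lam \<sigma> u = suminf (t u)" for u unfolding play_val_def t_def by simp
  have st: "summable (t u)" for u unfolding t_def by (rule pv_summable[OF js])
  have sh: "t v (i + 1) = lam (v, \<sigma> v) * t (\<sigma> v) i" for i
  proof -
    have f: "(\<sigma> ^^ Suc k) v = (\<sigma> ^^ k) (\<sigma> v)" for k by (simp add: funpow_Suc_right del: funpow.simps)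
    have "t v (i + 1) = w ((\<sigma> ^^ Suc i) v, (\<sigma> ^^ Suc (Suc i)) v) * (lam (v, \<sigma> v) * (\<Prod>j<i. lam ((\<sigma> ^^ Suc j) v, (\<sigma> ^^ Suc (Suc j)) v)))"
      unfolding t_def by (simp only: Suc_eq_plus1[symmetric] prod.lessThan_Suc_shift) simp
    then show ?thesis unfolding t_def f by (simp add: mult_ac)
  qed
  have "suminf (t v) = (\<Sum>i. t v (i + 1)) + t v 0"
    using suminf_split_initial_segment[OF st, of v 1] by simp
  also have "(\<Sum>i. t v (i + 1)) = lam (v, \<sigma> v) * suminf (t (\<sigma> v))"
    unfolding sh by (rule suminf_mult[OF st])
  finally show ?thesis unfolding pv t_def by simp
qed

lemma pv_lower:
  assumes js: "\<forall>v. (v, \<sigma> v) \<in> E"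
    and y: "\<forall>v. y v \<le> w (v, \<sigma> v) + lam (v, \<sigma> v) * y (\<sigma> v)"
  shows "y v \<le> play_val w lam \<sigma> v"
proof -
  define z where "z u = y u - play_val w lam \<sigma> u" for u
  have zs: "z u \<le> lam (u, \<sigma> u) * z (\<sigma> u)" for u
    using y[rule_format, of u] pv_rec[OF js, of u] unfolding z_def right_diff_distrib by linarith
  define M where "M = Max (range z)"
  have zM: "z u \<le> M" for u unfolding M_def by (rule Max_ge) auto
  have "M \<in> range z" unfolding M_def by (intro Max_in) auto
  then obtain a where a: "z a = M" by auto
  have "M \<le> 0"
  proof (rule ccontr)
    assume "\<not> M \<le> 0"
    then have Mp: "M > 0" by simp
    have l0: "0 \<le> lam (a, \<sigma> a)" "lam (a, \<sigma> a) < 1"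
      using lam_ge[of "(a, \<sigma> a)"] lam_le[of "(a, \<sigma> a)"] cc_lt js by fastforce+
    have "M \<le> lam (a, \<sigma> a) * z (\<sigma> a)" using zs[of a] a by simp
    also have "\<dots> \<le> lam (a, \<sigma> a) * M" using l0 zM by (simp add: mult_left_mono)
    also have "\<dots> < M" using l0 Mp by simp
    finally show False by simp
  qed
  then show ?thesis using zM[of v] unfolding z_def by simp
qed

lemma pv_upper:
  assumes js: "\<forall>v. (v, \<sigma> v) \<in> E"
    and y: "\<forall>v. y v \<ge> w (v, \<sigma> v) + lam (v, \<sigma> v) * y (\<sigma> v)"
  shows "y v \<ge> play_val w lam \<sigma> v"
proof -
  define z where "z u = play_val w lam \<sigma> u - y u" for u
  have zs: "z u \<le> lam (u, \<sigma> u) * z (\<sigma> u)" for u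
    using y[rule_format, of u] pv_rec[OF js, of u] unfolding z_def right_diff_distrib by linarith
  define M where "M = Max (range z)"
  have zM: "z u \<le> M" for u unfolding M_def by (rule Max_ge) auto
  have "M \<in> range z" unfolding M_def by (intro Max_in) auto
  then obtain a where a: "z a = M" by auto
  have "M \<le> 0"
  proof (rule ccontr)
    assume "\<not> M \<le> 0"
    then have Mp: "M > 0" by simp
    have l0: "0 \<le> lam (a, \<sigma> a)" "lam (a, \<sigma> a) < 1"
      using lam_ge[of "(a, \<sigma> a)"] lam_le[of "(a, \<sigma> a)"] cc_lt js by fastforce+
    have "M \<le> lam (a, \<sigma> a) * z (\<sigma> a)" using zs[of a] a by simp
    also have "\<dots> \<le> lam (a, \<sigma> a) * M" using l0 zM by (simp add: mult_left_mono)
    also have "\<dots> < M" using l0 Mp by simp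
    finally show False by simp
  qed
  then show ?thesis using zM[of v] unfolding z_def by simp
qed


lemma bellman_game_val:
  assumes b: "bellman Vmax E w lam x"
  shows "game_val Vmax E w lam = x"
proof
  fix v
  define SMAX where "SMAX = {s. \<forall>u\<in>Vmax. (u, s u) \<in> E}"
  define SMIN where "SMIN = {s. \<forall>u\<in>-Vmax. (u, s u) \<in> E}"
  define F where "F smax = (INF smin \<in> SMIN. play_val w lam (combine Vmax smax smin) v)" for smax
  have gv: "game_val Vmax E w lam v = (SUP smax \<in> SMAX. F smax)"
    unfolding game_val_def SMAX_def SMIN_def F_def by simp
  define st where "st u = (SOME u'. (u, u') \<in> E \<and> eq_holds w lam x (u, u'))" for u
  have st: "(u, st u) \<in> E \<and> eq_holds w lam x (u, st u)" for u
    using b unfolding bellman_def st_def by (metis (mono_tags, lifting) someI_ex)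
  have ih: "(u, u') \<in> E \<Longrightarrow> ineq_holds Vmax w lam x (u, u')" for u u'
    using b unfolding bellman_def solution_H_def by auto
  have stMAX: "st \<in> SMAX" and stMIN: "st \<in> SMIN" unfolding SMAX_def SMIN_def using st by auto
  have jsc: "\<forall>u. (u, combine Vmax smax smin u) \<in> E" if "smax \<in> SMAX" "smin \<in> SMIN" for smax smin
    using that unfolding SMAX_def SMIN_def combine_def by auto
  have finF: "finite (F ` SMAX)" by simp
  have finP: "finite ((\<lambda>smin. play_val w lam (combine Vmax smax smin) v) ` SMIN)" for smax by simp
  have lo: "x v \<le> F st"
    unfolding F_def
  proof (rule cINF_greatest)
    show "SMIN \<noteq> {}" using stMIN by auto
    fix smin assume sm: "smin \<in> SMIN"
    show "x v \<le> play_val w lam (combine Vmax st smin) v"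
    proof (rule pv_lower[OF jsc[OF stMAX sm]], intro allI)
      fix u
      show "x u \<le> w (u, combine Vmax st smin u) + lam (u, combine Vmax st smin u) * x (combine Vmax st smin u)"
      proof (cases "u \<in> Vmax")
        case True
        then have "combine Vmax st smin u = st u" unfolding combine_def by simp
        moreover have "x u = w (u, st u) + lam (u, st u) * x (st u)" using st[of u] unfolding eq_holds_def by simp
        ultimately show ?thesis by simp
      next
        case False
        then have "(u, smin u) \<in> E" using sm unfolding SMIN_def by auto
        then show ?thesis using ih[of u "smin u"] False unfolding combine_def ineq_holds_def by simp
      qed
    qed
  qed
  have up: "F smax \<le> x v" if sm: "smax \<in> SMAX" for smax
  proof -
    have "F smax \<le> play_val w lam (combine Vmax smax st) v"
      unfolding F_def by (rule cINF_lower[OF bdd_below_finite[OF finP] stMIN])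
    also have "\<dots> \<le> x v"
    proof (rule pv_upper[OF jsc[OF sm stMIN]], intro allI)
      fix u
      show "x u \<ge> w (u, combine Vmax smax st u) + lam (u, combine Vmax smax st u) * x (combine Vmax smax st u)"
      proof (cases "u \<in> Vmax")
        case False
        then have "combine Vmax smax st u = st u" unfolding combine_def by simp
        moreover have "x u = w (u, st u) + lam (u, st u) * x (st u)" using st[of u] unfolding eq_holds_def by simp
        ultimately show ?thesis by simp
      next
        case True
        then have "(u, smax u) \<in> E" using sm unfolding SMAX_def by auto
        then show ?thesis using ih[of u "smax u"] True unfolding combine_def ineq_holds_def by simp
      qed
    qed
    finally show ?thesis .
  qed
  have "x v \<le> (SUP smax \<in> SMAX. F smax)"
    using lo cSUP_upper[OF stMAX bdd_above_finite[OF finF]] by linarith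
  moreover have "(SUP smax \<in> SMAX. F smax) \<le> x v"
    using stMAX up by (intro cSUP_least) auto
  ultimately show "game_val Vmax E w lam v = x v" using gv by simp
qed


end

theorem theorem3p3:
  fixes Vmax :: "'v::finite set" and E :: "('v \<times> 'v) set"
    and w lam :: "'v \<times> 'v \<Rightarrow> real" and \<sigma> :: "'v \<Rightarrow> 'v" and \<nu> :: "'v \<Rightarrow> real"
  assumes "dpg Vmax E lam"
    and "joint_strategy E \<sigma>"
    and "basis_valuation Vmax E w lam \<nu>"
    and "\<forall>x. solution_H Vmax E w lam x \<longrightarrow> f_strat Vmax w lam \<sigma> \<nu> \<le> f_strat Vmax w lam \<sigma> x"
  shows "(co_optimal Vmax E w lam \<sigma> \<longrightarrow> f_strat Vmax w lam \<sigma> \<nu> = 0)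
    \<and> ((defines_strategies E w lam \<nu> \<and> (\<forall>v. eq_holds w lam \<nu> (v, \<sigma> v)))
        \<longrightarrow> co_optimal Vmax E w lam \<sigma> \<and> \<nu> = game_val Vmax E w lam)"
proof -
  interpret dpgl Vmax E w lam by unfold_locales (rule assms(1))
  have js: "\<forall>v. (v, \<sigma> v) \<in> E" using assms(2) unfolding joint_strategy_def by simp
  have solnu: "solution_H Vmax E w lam \<nu>" using assms(3) unfolding basis_valuation_def by simp
  have fge: "0 \<le> f_strat Vmax w lam \<sigma> \<nu>"
    unfolding f_strat_def
  proof (rule sum_nonneg)
    fix v
    have "ineq_holds Vmax w lam \<nu> (v, \<sigma> v)" using solnu js unfolding solution_H_def by auto
    then show "0 \<le> offset Vmax w lam \<nu> (v, \<sigma> v)" unfolding ineq_holds_def offset_def by (auto split: if_splits)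
  qed
  have fpv: "f_strat Vmax w lam \<sigma> (play_val w lam \<sigma>) = 0"
    unfolding f_strat_def
  proof (intro sum.neutral ballI)
    fix v
    have r: "play_val w lam \<sigma> v = w (v, \<sigma> v) + lam (v, \<sigma> v) * play_val w lam \<sigma> (\<sigma> v)"
      by (rule pv_rec[OF js])
    show "offset Vmax w lam (play_val w lam \<sigma>) (v, \<sigma> v) = 0"
    proof (cases "v \<in> Vmax")
      case True
      then have "offset Vmax w lam (play_val w lam \<sigma>) (v, \<sigma> v) = play_val w lam \<sigma> v - (w (v, \<sigma> v) + lam (v, \<sigma> v) * play_val w lam \<sigma> (\<sigma> v))"
        unfolding offset_def by simp
      then show ?thesis using r by linarith
    next
      case False
      then have "offset Vmax w lam (play_val w lam \<sigma>) (v, \<sigma> v) = (w (v, \<sigma> v) + lam (v, \<sigma> v) * play_val w lam \<sigma> (\<sigma> v)) - play_val w lam \<sigma> v"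
        unfolding offset_def by simp
      then show ?thesis using r by linarith
    qed
  qed
  have p1: "f_strat Vmax w lam \<sigma> \<nu> = 0" if co: "co_optimal Vmax E w lam \<sigma>"
  proof -
    obtain x where bx: "bellman Vmax E w lam x" using bellman_exists by blast
    have "play_val w lam \<sigma> = x" using co bellman_game_val[OF bx] unfolding co_optimal_def by simp
    then have "solution_H Vmax E w lam (play_val w lam \<sigma>)" using bx unfolding bellman_def by simp
    then have "f_strat Vmax w lam \<sigma> \<nu> \<le> 0" using assms(4) fpv by fastforce
    then show ?thesis using fge by simp
  qed
  have p2: "co_optimal Vmax E w lam \<sigma> \<and> \<nu> = game_val Vmax E w lam"
    if eqs: "\<forall>v. eq_holds w lam \<nu> (v, \<sigma> v)"
  proof -
    have bn: "bellman Vmax E w lam \<nu>" unfolding bellman_def using solnu eqs js by blast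
    have gv: "game_val Vmax E w lam = \<nu>" by (rule bellman_game_val[OF bn])
    have "play_val w lam \<sigma> = \<nu>"
    proof
      fix v
      have e: "\<nu> u = w (u, \<sigma> u) + lam (u, \<sigma> u) * \<nu> (\<sigma> u)" for u
        using eqs[rule_format, of u] unfolding eq_holds_def fst_conv snd_conv .
      have e1: "\<forall>v. \<nu> v \<le> w (v, \<sigma> v) + lam (v, \<sigma> v) * \<nu> (\<sigma> v)"
      proof
        fix v show "\<nu> v \<le> w (v, \<sigma> v) + lam (v, \<sigma> v) * \<nu> (\<sigma> v)" using e[of v] by linarith
      qed
      have e2: "\<forall>v. \<nu> v \<ge> w (v, \<sigma> v) + lam (v, \<sigma> v) * \<nu> (\<sigma> v)"
      proof
        fix v show "\<nu> v \<ge> w (v, \<sigma> v) + lam (v, \<sigma> v) * \<nu> (\<sigma> v)" using e[of v] by linarith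
      qed
      show "play_val w lam \<sigma> v = \<nu> v"
        using pv_lower[OF js e1, of v] pv_upper[OF js e2, of v] by linarith
    qed
    then show ?thesis using gv unfolding co_optimal_def by simp
  qed
  show ?thesis using p1 p2 by blast
qed

end
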